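(* (Liveness of YAC.) Consider a network of $n = 3f+1$ validating peers running the YAC consensus protocol, of which at most $f$ are faulty (Byzantine), under the standing assumptions listed in the context. Then every correct (valid) client transaction is eventually committed by the honest peers.
   Context: YAC protocol. There are $n=3f+1$ validating peers with a fixed initial ordered list. Rounds $r=1,2,\dots$: in round $r$ the peer processes the $r$-th proposal. The round starts when the peer begins processing the proposal and ends when it commits a block. An Ordering Service (OS) collects client transactions and broadcasts a proposal, an ordered list of transactions, to all peers. Each peer validates the proposal against its local state and discards invalid transactions. From the remaining transactions, the proposal hash and metadata, it forms a block and computes the block hash. A vote is a message containing the pair (proposal hash, block hash) and the peer's signature. Each peer computes a permutation of the peers using a pure function of the block hash and the initial peer list whose output lists are uniformly distributed. It sends its vote to the peers in that order, waiting a fixed delay between sends and cycling through the order repeatedly (vote steps), until it receives a valid commit or reject message. A supermajority is any number greater than two thirds of all peers. A commit message is a set of votes for one block hash signed by a supermajority of peers. A peer that collects a supermajority of votes for one hash broadcasts the commit message and commits the block. A reject message is a set of votes proving that no block hash can reach a supermajority. Commit forwarding: if a peer that has already committed receives a vote for that round, it sends the commit message directly to the voter. An honest peer is one that tries to synchronize with the network, creates valid votes and commits, and never creates forks. Standing assumptions: (i) The OS is itself Byzantine fault tolerant and orders transactions honestly. Every valid client transaction eventually appears in some proposal, and every proposal is delivered to all peers. (ii) Asynchronous environment: every message successfully sent is eventually received. (iii) Hashes and digital signatures are cryptographically secure, and messages cannot be altered or forged by adversaries. (iv) The reject case does not occur; its occurrence is regarded as a violation of the BFT assumption. *)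

theory Defs
  imports Main
begin

text \<open>Rounds are numbered 1,2,...; props r is the r-th proposal
  broadcast by the (BFT, honest) ordering service. A message is a triple
  (source, destination, payload). cm t p r = Some h means that at time t peer p
  has committed (in round r) the block with hash h.\<close>

datatype ('p, 'h) msg =
    Vote nat 'h
  | Commit nat 'h "'p set"   \<comment> \<open>commit message: the votes for (r,h) signed by the peers in the set\<close>

type_synonym ('p, 'h) net = "nat \<Rightarrow> ('p \<times> 'p \<times> ('p, 'h) msg) set"

definition yac_block :: "('t \<Rightarrow> bool) \<Rightarrow> (nat \<Rightarrow> 't list) \<Rightarrow> nat \<Rightarrow> 't list" where
  "yac_block valid props r = filter valid (props r)"

definition supermajority :: "'p set \<Rightarrow> 'p set \<Rightarrow> bool" where
  "supermajority P V \<longleftrightarrow> V \<subseteq> P \<and> 3 * card V > 2 * card P"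

text \<open>Signatures cannot be forged (assumption (iii)): an honest
  (non-faulty) signer's vote for (r,h) exists only if that peer actually sent it.\<close>
definition valid_commit ::
  "'p set \<Rightarrow> 'p set \<Rightarrow> ('p, 'h) net \<Rightarrow> nat \<Rightarrow> 'h \<Rightarrow> 'p set \<Rightarrow> bool" where
  "valid_commit P F sent r h V \<longleftrightarrow>
     supermajority P V \<and> (\<forall>v \<in> V - F. \<exists>t q. (v, q, Vote r h) \<in> sent t)"

definition os_assumption :: "('t \<Rightarrow> bool) \<Rightarrow> (nat \<Rightarrow> 't list) \<Rightarrow> bool" where
  "os_assumption valid props \<longleftrightarrow> (\<forall>x. valid x \<longrightarrow> (\<exists>r\<ge>1. x \<in> set (props r)))"

definition reliable_delivery :: "('p, 'h) net \<Rightarrow> ('p, 'h) net \<Rightarrow> bool" where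
  "reliable_delivery sent rcvd \<longleftrightarrow>
     (\<forall>t a b m. (a, b, m) \<in> sent t \<longrightarrow> (\<exists>t'\<ge>t. (a, b, m) \<in> rcvd t'))"

definition no_forgery :: "('p, 'h) net \<Rightarrow> ('p, 'h) net \<Rightarrow> bool" where
  "no_forgery sent rcvd \<longleftrightarrow>
     (\<forall>t a b m. (a, b, m) \<in> rcvd t \<longrightarrow> (\<exists>t'\<le>t. (a, b, m) \<in> sent t'))"

text \<open>Peer p has started (is processing) round r at time t: round 1 is processed from the
  start, round r+1 once round r has been committed (the proposal is delivered by the OS).\<close>
definition started :: "(nat \<Rightarrow> 'p \<Rightarrow> nat \<Rightarrow> 'h option) \<Rightarrow> nat \<Rightarrow> 'p \<Rightarrow> nat \<Rightarrow> bool" where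
  "started cm t p r \<longleftrightarrow> r = 1 \<or> (r > 1 \<and> cm t p (r - 1) \<noteq> None)"

definition yac_honest ::
  "'p set \<Rightarrow> 'p set \<Rightarrow> ('t \<Rightarrow> bool) \<Rightarrow> (nat \<Rightarrow> 't list) \<Rightarrow> ('t list \<Rightarrow> 'h)
   \<Rightarrow> ('p, 'h) net \<Rightarrow> ('p, 'h) net \<Rightarrow> (nat \<Rightarrow> 'p \<Rightarrow> nat \<Rightarrow> 'h option) \<Rightarrow> bool" where
  "yac_honest P F valid props hsh sent rcvd cm \<longleftrightarrow>
     \<comment> \<open>commits are final (no forks)\<close>
     (\<forall>p \<in> P - F. \<forall>t t' r h. t \<le> t' \<longrightarrow> cm t p r = Some h \<longrightarrow> cm t' p r = Some h) \<and>
     \<comment> \<open>honest votes are valid: for the hash of the block formed from the proposal\<close>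
     (\<forall>p \<in> P - F. \<forall>t q r h. (p, q, Vote r h) \<in> sent t \<longrightarrow> h = hsh (yac_block valid props r)) \<and>
     \<comment> \<open>vote steps: while not committed, the peer keeps sending its vote to every peer,
         cycling through the peer list repeatedly\<close>
     (\<forall>p \<in> P - F. \<forall>q \<in> P. \<forall>r t. started cm t p r \<longrightarrow> cm t p r = None \<longrightarrow>
        (\<exists>t'\<ge>t. (p, q, Vote r (hsh (yac_block valid props r))) \<in> sent t' \<or> cm t' p r \<noteq> None)) \<and>
     \<comment> \<open>collecting a supermajority of votes for one hash leads to a commit\<close>
     (\<forall>p \<in> P - F. \<forall>r t h V. started cm t p r \<longrightarrow> supermajority P V \<longrightarrow>
        (\<forall>v \<in> V. \<exists>t'\<le>t. (v, p, Vote r h) \<in> rcvd t') \<longrightarrow> (\<exists>t'\<ge>t. cm t' p r \<noteq> None)) \<and>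
     \<comment> \<open>receiving a valid commit message leads to a commit\<close>
     (\<forall>p \<in> P - F. \<forall>q r h V t. (q, p, Commit r h V) \<in> rcvd t \<longrightarrow> valid_commit P F sent r h V \<longrightarrow>
        (\<exists>t'\<ge>t. cm t' p r \<noteq> None)) \<and>
     \<comment> \<open>honest commits are justified by a valid commit message\<close>
     (\<forall>p \<in> P - F. \<forall>t r h. cm t p r = Some h \<longrightarrow> (\<exists>V. valid_commit P F sent r h V)) \<and>
     \<comment> \<open>commit forwarding: a vote received after committing is answered with the commit message\<close>
     (\<forall>p \<in> P - F. \<forall>q r h h' t t'. cm t p r = Some h \<longrightarrow> t \<le> t' \<longrightarrow> (q, p, Vote r h') \<in> rcvd t' \<longrightarrow>
        (\<exists>t''\<ge>t'. \<exists>V. valid_commit P F sent r h V \<and> (p, q, Commit r h V) \<in> sent t''))"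

end

theory Submission
  imports Defs
begin

theorem lemma2:
  fixes P F :: "'p set" and f :: nat
    and valid :: "'t \<Rightarrow> bool" and props :: "nat \<Rightarrow> 't list" and hsh :: "'t list \<Rightarrow> 'h"
    and sent rcvd :: "('p, 'h) net" and cm :: "nat \<Rightarrow> 'p \<Rightarrow> nat \<Rightarrow> 'h option"
    and tx :: 't
  assumes "finite P" and "card P = 3 * f + 1"
    and "F \<subseteq> P" and "card F \<le> f"
    and "os_assumption valid props"
    and "inj hsh"
    and "reliable_delivery sent rcvd"
    and "no_forgery sent rcvd"
    and "yac_honest P F valid props hsh sent rcvd cm"
    and "valid tx"
  shows "\<exists>r\<ge>1. tx \<in> set (yac_block valid props r) \<and>
           (\<forall>p \<in> P - F. \<exists>t. cm t p r = Some (hsh (yac_block valid props r)))"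
proof -
  define H where "H = P - F"
  define B where "B = (\<lambda>r. hsh (yac_block valid props r))"
  have finF: "finite F" using assms(1,3) finite_subset by blast
  have finH: "finite H" using assms(1) H_def by simp
  have cardH: "card H \<ge> 2 * f + 1"
    using card_Diff_subset[OF finF assms(3)] assms(2,4) H_def by simp
  have smH: "supermajority P H" unfolding supermajority_def H_def
    using cardH assms(2) H_def by auto
  have HP: "H \<subseteq> P" using H_def by auto
  have fin: "\<forall>p\<in>H. \<forall>t t' r h. t \<le> t' \<longrightarrow> cm t p r = Some h \<longrightarrow> cm t' p r = Some h"
    unfolding H_def using assms(9)[unfolded yac_honest_def] by (elim conjE) assumption
  have hv: "\<forall>p\<in>H. \<forall>t q r h. (p, q, Vote r h) \<in> sent t \<longrightarrow> h = B r"
    unfolding H_def B_def using assms(9)[unfolded yac_honest_def] by (elim conjE) assumption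
  have vs: "\<forall>p\<in>H. \<forall>q \<in> P. \<forall>r t. started cm t p r \<longrightarrow> cm t p r = None \<longrightarrow>
        (\<exists>t'\<ge>t. (p, q, Vote r (B r)) \<in> sent t' \<or> cm t' p r \<noteq> None)"
    unfolding H_def B_def using assms(9)[unfolded yac_honest_def] by (elim conjE) assumption
  have sm: "\<forall>p\<in>H. \<forall>r t h V. started cm t p r \<longrightarrow> supermajority P V \<longrightarrow>
        (\<forall>v \<in> V. \<exists>t'\<le>t. (v, p, Vote r h) \<in> rcvd t') \<longrightarrow> (\<exists>t'\<ge>t. cm t' p r \<noteq> None)"
    unfolding H_def using assms(9)[unfolded yac_honest_def] by (elim conjE) assumption
  have vc: "\<forall>p\<in>H. \<forall>q r h V t. (q, p, Commit r h V) \<in> rcvd t \<longrightarrow> valid_commit P F sent r h V \<longrightarrow>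
        (\<exists>t'\<ge>t. cm t' p r \<noteq> None)"
    unfolding H_def using assms(9)[unfolded yac_honest_def] by (elim conjE) assumption
  have cj: "\<forall>p\<in>H. \<forall>t r h. cm t p r = Some h \<longrightarrow> (\<exists>V. valid_commit P F sent r h V)"
    unfolding H_def using assms(9)[unfolded yac_honest_def] by (elim conjE) assumption
  have fw: "\<forall>p\<in>H. \<forall>q r h h' t t'. cm t p r = Some h \<longrightarrow> t \<le> t' \<longrightarrow> (q, p, Vote r h') \<in> rcvd t' \<longrightarrow>
        (\<exists>t''\<ge>t'. \<exists>V. valid_commit P F sent r h V \<and> (p, q, Commit r h V) \<in> sent t'')"
    unfolding H_def using assms(9)[unfolded yac_honest_def] by (elim conjE) assumption
  have rel: "\<And>t a b m. (a, b, m) \<in> sent t \<Longrightarrow> \<exists>t'\<ge>t. (a, b, m) \<in> rcvd t'"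
    using assms(7) unfolding reliable_delivery_def by blast
  have pers: "started cm t' p r" if pa: "p \<in> H" "started cm t p r" "t \<le> t'" for p t t' r
  proof -
    show ?thesis
    proof (cases "r = 1")
      case True then show ?thesis by (simp add: started_def)
    next
      case False
      then obtain h where "r > 1" "cm t p (r - 1) = Some h" using pa(2) unfolding started_def by auto
      then show ?thesis using fin pa unfolding started_def by blast
    qed
  qed
  have step: "\<forall>p\<in>H. \<exists>t. cm t p r \<noteq> None" if st: "\<forall>p\<in>H. \<exists>t. started cm t p r" for r
  proof
    fix p assume pH: "p \<in> H"
    show "\<exists>t. cm t p r \<noteq> None"
    proof (rule ccontr)
      assume "\<not> (\<exists>t. cm t p r \<noteq> None)"
      hence nc: "\<And>t. cm t p r = None" by blast
      obtain ts where ts: "\<forall>q\<in>H. started cm (ts q) q r" using st by metis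
      obtain T where T: "\<forall>q\<in>H. ts q \<le> T"
        using finite_nat_set_iff_bounded_le[of "ts ` H"] finH by auto
      have stT: "\<forall>q\<in>H. started cm t q r" if "t \<ge> T" for t
        using ts T pers that by (meson order_trans)
      show False
      proof (cases "\<exists>q\<in>H. \<exists>t0. cm t0 q r \<noteq> None")
        case True
        then obtain q t0 h where q: "q \<in> H" "cm t0 q r = Some h" by blast
        have s1: "started cm (max T t0) p r" using stT pH by simp
        have qP: "q \<in> P" using q(1) HP by blast
        have "\<exists>t'\<ge>max T t0. (p, q, Vote r (B r)) \<in> sent t' \<or> cm t' p r \<noteq> None"
          using vs[rule_format, OF pH qP s1 nc] .
        then obtain t1 where t1: "t1 \<ge> max T t0" "(p, q, Vote r (B r)) \<in> sent t1"
          using nc by auto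
        then obtain t2 where t2: "t2 \<ge> t1" "(p, q, Vote r (B r)) \<in> rcvd t2" using rel by blast
        have "t0 \<le> t2" using t1 t2 by simp
        then obtain t3 V where V1: "valid_commit P F sent r h V" and V2: "(q, p, Commit r h V) \<in> sent t3"
          using fw[rule_format, OF q(1) q(2) _ t2(2)] by blast
        obtain t4 where t4: "(q, p, Commit r h V) \<in> rcvd t4" using rel[OF V2] by blast
        show False using vc[rule_format, OF pH t4 V1] nc by auto
      next
        case False
        have "\<forall>v\<in>H. \<exists>t. (v, p, Vote r (B r)) \<in> rcvd t"
        proof
          fix v assume vH: "v \<in> H"
          have s2: "started cm T v r" "cm T v r = None" using stT vH False by auto
          have pP: "p \<in> P" using pH HP by blast
          have "\<exists>t'\<ge>T. (v, p, Vote r (B r)) \<in> sent t' \<or> cm t' v r \<noteq> None"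
            using vs[rule_format, OF vH pP s2] .
          then obtain t1 where "(v, p, Vote r (B r)) \<in> sent t1"
            using vH False by auto
          then show "\<exists>t. (v, p, Vote r (B r)) \<in> rcvd t" using rel by blast
        qed
        then obtain g where g: "\<forall>v\<in>H. (v, p, Vote r (B r)) \<in> rcvd (g v)" by metis
        obtain T2 where T2: "\<forall>v\<in>H. g v \<le> T2"
          using finite_nat_set_iff_bounded_le[of "g ` H"] finH by auto
        have s3: "started cm (max T T2) p r" using stT pH by simp
        have r3: "\<forall>v \<in> H. \<exists>t'\<le>max T T2. (v, p, Vote r (B r)) \<in> rcvd t'"
          using g T2 by (meson max.coboundedI2)
        have "\<exists>t'\<ge>max T T2. cm t' p r \<noteq> None"
          using sm[rule_format, OF pH s3 smH] r3 by blast
        then show False using nc by auto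
      qed
    qed
  qed
  have all: "\<forall>p\<in>H. \<exists>t. cm t p (Suc n) \<noteq> None" for n
  proof (induction n)
    case 0
    show ?case by (rule step) (simp add: started_def)
  next
    case (Suc n)
    show ?case by (rule step) (use Suc in \<open>simp add: started_def\<close>)
  qed
  have corr: "h = B r" if ca: "p \<in> H" "cm t p r = Some h" for p t r h
  proof -
    obtain V where V: "valid_commit P F sent r h V" using cj ca by blast
    hence VP: "V \<subseteq> P" and c: "3 * card V > 2 * card P"
      unfolding valid_commit_def supermajority_def by auto
    have "\<not> V \<subseteq> F"
    proof
      assume "V \<subseteq> F"
      hence "card V \<le> card F" using finF card_mono by blast
      thus False using c assms(2,4) by simp
    qed
    then obtain v where v: "v \<in> V - F" by blast
    then obtain t q where "(v, q, Vote r h) \<in> sent t" using V unfolding valid_commit_def by blast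
    moreover have "v \<in> H" using v VP H_def by auto
    ultimately show ?thesis using hv by blast
  qed
  obtain r where r: "r \<ge> 1" "tx \<in> set (props r)" using assms(5,10) unfolding os_assumption_def by blast
  then obtain n where n: "r = Suc n" by (cases r) auto
  have "tx \<in> set (yac_block valid props r)" using r assms(10) by (simp add: yac_block_def)
  moreover have "\<forall>p \<in> P - F. \<exists>t. cm t p r = Some (hsh (yac_block valid props r))"
  proof
    fix p assume "p \<in> P - F"
    hence pH: "p \<in> H" using H_def by simp
    then obtain t h where "cm t p r = Some h" using all n by blast
    thus "\<exists>t. cm t p r = Some (hsh (yac_block valid props r))" using corr pH B_def by metis
  qed
  ultimately show ?thesis using r by blast
qed

end
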